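(* Let $(\mathcal C,S,T)$ be a finite basic association schemoid whose underlying category is a connected groupoid with $T(f)=f^{-1}$, let $H:\mathcal C\to\mathbb K\text{-Mod}$ be a functor such that $D=\pi^*p^*H$ has all $D_g$ finite abelian groups, let $D_+\to\mathcal E\xrightarrow{q}\mathcal C$ be a linear extension and $(\mathcal E,\widetilde S)$ with $\widetilde S=\{q^{-1}(\sigma)\}_{\sigma\in S}$ the associated schemoid extension, and let $\mathbb K$ be a field. Then the algebra map $\mathbb K(q):\mathbb K(\mathcal E,\widetilde S)\to\mathbb K(\mathcal C,S)$, $s_{\tilde\pi}\mapsto n^q_{\tilde\pi}s_{q(\tilde\pi)}=\#D_g\, s_{q(\tilde\pi)}$, is an isomorphism if and only if the characteristic of $\mathbb K$ does not divide $\#D_g$ for any morphism $g$ of $\mathcal C$; if the characteristic divides $\#D_g$ for some $g$, then $\mathbb K(q)$ is the zero map.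
   Context: Write $s(f),t(f)$ for source and target. A quasi-schemoid is a pair $(\mathcal C,S)$ with $\mathcal C$ a small category and $S$ a partition of $mor(\mathcal C)$ into nonempty blocks such that for all $\sigma,\tau,\mu\in S$ and $f,g\in\mu$ the sets $\{(a,b)\in\sigma\times\tau: s(a)=t(b), a\circ b=f\}$ and the analogous set for $g$ have equal cardinality. An association schemoid is a triple $(\mathcal C,S,T)$ with $(\mathcal C,S)$ a quasi-schemoid, every block containing an endomorphism consisting only of endomorphisms, and $T$ a contravariant endofunctor with $T^2=\mathrm{id}$ and $\{T(f):f\in\sigma\}\in S$. It is finite if $mor(\mathcal C)$ is finite, unital if every block meeting $\{1_x\}$ lies in $\{1_x\}$, basic if unital with $\mathcal C$ a groupoid. The category $F(\mathcal C)$ has objects the morphisms of $\mathcal C$ and morphisms $f\to g$ the pairs $(\alpha,\beta)$ with $g=\alpha f\beta$; a natural system is a functor $D:F(\mathcal C)\to\mathbb K\text{-Mod}$, $f_*=D(f,1)$, $g^*=D(1,g)$; $D=\pi^*p^*H$ means $D_f=H(t(f))$, $D(\alpha,\beta)=H(\alpha)$. A linear extension $D_+\to\mathcal E\xrightarrow{q}\mathcal C$ consists of a category $\mathcal E$ with the same objects and a full functor $q$ that is the identity on objects, such that each $D_f$ acts transitively and freely on $q^{-1}(f)$ and $(f_0+\alpha)(g_0+\beta)=f_0g_0+f_*\beta+g^*\alpha$. The category algebra $\mathbb K\mathcal C$ is the free $\mathbb K$-module on $mor(\mathcal C)$ with product $a\cdot b=a\circ b$ if composable and $0$ otherwise; $s_\sigma=\sum_{f\in\sigma}f$;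 the schemoid algebra $\mathbb K(\mathcal C,S)$ is the span of the $s_\sigma$. $q(\tilde\pi)$ denotes the block of $S$ containing $q(\tilde\pi)$, and $n^q_{\tilde\pi}$ is the number of $f\in\tilde\pi$ with $t(f)=x$ and $q(f)=g$ (for any $x$ and $g\in q(\tilde\pi)$ with $t(g)=x$), which equals $\#D_g$ (constant since $\mathcal C$ is connected). *)

theory Defs
  imports Main "HOL.Modules"
begin

record ('o, 'm) cat =
  Obj  :: "'o set"
  Mor  :: "'m set"
  Dom  :: "'m \<Rightarrow> 'o"
  Cod  :: "'m \<Rightarrow> 'o"
  Comp :: "'m \<Rightarrow> 'm \<Rightarrow> 'm"      (* Comp a b = a \<circ> b, defined when Dom a = Cod b *)
  Ide  :: "'o \<Rightarrow> 'm"

definition is_category :: "('o, 'm) cat \<Rightarrow> bool" where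
  "is_category C \<longleftrightarrow>
     (\<forall>f\<in>Mor C. Dom C f \<in> Obj C \<and> Cod C f \<in> Obj C) \<and>
     (\<forall>x\<in>Obj C. Ide C x \<in> Mor C \<and> Dom C (Ide C x) = x \<and> Cod C (Ide C x) = x) \<and>
     (\<forall>f\<in>Mor C. \<forall>g\<in>Mor C. Dom C f = Cod C g \<longrightarrow>
         Comp C f g \<in> Mor C \<and> Dom C (Comp C f g) = Dom C g \<and> Cod C (Comp C f g) = Cod C f) \<and>
     (\<forall>f\<in>Mor C. \<forall>g\<in>Mor C. \<forall>h\<in>Mor C. Dom C f = Cod C g \<longrightarrow> Dom C g = Cod C h \<longrightarrow>
         Comp C (Comp C f g) h = Comp C f (Comp C g h)) \<and>
     (\<forall>f\<in>Mor C. Comp C (Ide C (Cod C f)) f = f \<and> Comp C f (Ide C (Dom C f)) = f)"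

definition is_groupoid :: "('o, 'm) cat \<Rightarrow> bool" where
  "is_groupoid C \<longleftrightarrow> is_category C \<and>
     (\<forall>f\<in>Mor C. \<exists>g\<in>Mor C. Dom C g = Cod C f \<and> Cod C g = Dom C f \<and>
         Comp C g f = Ide C (Dom C f) \<and> Comp C f g = Ide C (Cod C f))"

definition connected_cat :: "('o, 'm) cat \<Rightarrow> bool" where
  "connected_cat C \<longleftrightarrow> Obj C \<noteq> {} \<and>
     (\<forall>x\<in>Obj C. \<forall>y\<in>Obj C.
        (x, y) \<in> ({(Dom C f, Cod C f) | f. f \<in> Mor C} \<union> {(Cod C f, Dom C f) | f. f \<in> Mor C})\<^sup>*)"

definition is_partition :: "'m set \<Rightarrow> 'm set set \<Rightarrow> bool" where
  "is_partition M S \<longleftrightarrow> (\<forall>\<sigma>\<in>S. \<sigma> \<noteq> {}) \<and> \<Union>S = M \<and>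
     (\<forall>\<sigma>\<in>S. \<forall>\<tau>\<in>S. \<sigma> \<noteq> \<tau> \<longrightarrow> \<sigma> \<inter> \<tau> = {})"

definition structure_pairs :: "('o, 'm) cat \<Rightarrow> 'm set \<Rightarrow> 'm set \<Rightarrow> 'm \<Rightarrow> ('m \<times> 'm) set" where
  "structure_pairs C \<sigma> \<tau> f = {(a, b) \<in> \<sigma> \<times> \<tau>. Dom C a = Cod C b \<and> Comp C a b = f}"

definition quasi_schemoid :: "('o, 'm) cat \<Rightarrow> 'm set set \<Rightarrow> bool" where
  "quasi_schemoid C S \<longleftrightarrow> is_category C \<and> is_partition (Mor C) S \<and>
     (\<forall>\<sigma>\<in>S. \<forall>\<tau>\<in>S. \<forall>\<mu>\<in>S. \<forall>f\<in>\<mu>. \<forall>g\<in>\<mu>.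
        card (structure_pairs C \<sigma> \<tau> f) = card (structure_pairs C \<sigma> \<tau> g))"

definition contravariant_involution ::
  "('o, 'm) cat \<Rightarrow> ('o \<Rightarrow> 'o) \<Rightarrow> ('m \<Rightarrow> 'm) \<Rightarrow> bool" where
  "contravariant_involution C To T \<longleftrightarrow>
     (\<forall>x\<in>Obj C. To x \<in> Obj C \<and> To (To x) = x \<and> T (Ide C x) = Ide C (To x)) \<and>
     (\<forall>f\<in>Mor C. T f \<in> Mor C \<and> Dom C (T f) = To (Cod C f) \<and> Cod C (T f) = To (Dom C f)
                 \<and> T (T f) = f) \<and>
     (\<forall>f\<in>Mor C. \<forall>g\<in>Mor C. Dom C f = Cod C g \<longrightarrow> T (Comp C f g) = Comp C (T g) (T f))"

definition association_schemoid ::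
  "('o, 'm) cat \<Rightarrow> 'm set set \<Rightarrow> ('o \<Rightarrow> 'o) \<Rightarrow> ('m \<Rightarrow> 'm) \<Rightarrow> bool" where
  "association_schemoid C S To T \<longleftrightarrow> quasi_schemoid C S \<and>
     (\<forall>\<sigma>\<in>S. (\<exists>f\<in>\<sigma>. Dom C f = Cod C f) \<longrightarrow> (\<forall>f\<in>\<sigma>. Dom C f = Cod C f)) \<and>
     contravariant_involution C To T \<and>
     (\<forall>\<sigma>\<in>S. T ` \<sigma> \<in> S)"

definition unital_schemoid :: "('o, 'm) cat \<Rightarrow> 'm set set \<Rightarrow> bool" where
  "unital_schemoid C S \<longleftrightarrow>
     (\<forall>x\<in>Obj C. \<forall>\<sigma>\<in>S. \<sigma> \<inter> {Ide C x} \<noteq> {} \<longrightarrow> \<sigma> \<subseteq> {Ide C x})"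

definition finite_basic_association_schemoid ::
  "('o, 'm) cat \<Rightarrow> 'm set set \<Rightarrow> ('o \<Rightarrow> 'o) \<Rightarrow> ('m \<Rightarrow> 'm) \<Rightarrow> bool" where
  "finite_basic_association_schemoid C S To T \<longleftrightarrow>
     association_schemoid C S To T \<and> finite (Mor C) \<and> unital_schemoid C S \<and> is_groupoid C"

text \<open>A functor \<open>H : C \<rightarrow> K-Mod\<close>: each object \<open>x\<close> goes to a K-submodule \<open>Hob x\<close> of an
  ambient K-module (with scalar multiplication \<open>scale\<close>), each morphism to a K-linear map.\<close>
definition module_functor ::
  "('k::field \<Rightarrow> 'v::ab_group_add \<Rightarrow> 'v) \<Rightarrow> ('o, 'm) cat \<Rightarrow> ('o \<Rightarrow> 'v set) \<Rightarrow> ('m \<Rightarrow> 'v \<Rightarrow> 'v) \<Rightarrow> bool" where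
  "module_functor scale C Hob Hm \<longleftrightarrow> module scale \<and>
     (\<forall>x\<in>Obj C. 0 \<in> Hob x \<and> (\<forall>a\<in>Hob x. \<forall>b\<in>Hob x. a + b \<in> Hob x) \<and> (\<forall>c. \<forall>a\<in>Hob x. scale c a \<in> Hob x)) \<and>
     (\<forall>f\<in>Mor C. \<forall>a\<in>Hob (Dom C f). Hm f a \<in> Hob (Cod C f)) \<and>
     (\<forall>f\<in>Mor C. \<forall>a\<in>Hob (Dom C f). \<forall>b\<in>Hob (Dom C f). Hm f (a + b) = Hm f a + Hm f b) \<and>
     (\<forall>f\<in>Mor C. \<forall>c. \<forall>a\<in>Hob (Dom C f). Hm f (scale c a) = scale c (Hm f a)) \<and>
     (\<forall>x\<in>Obj C. \<forall>a\<in>Hob x. Hm (Ide C x) a = a) \<and>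
     (\<forall>f\<in>Mor C. \<forall>g\<in>Mor C. Dom C f = Cod C g \<longrightarrow>
        (\<forall>a\<in>Hob (Dom C g). Hm (Comp C f g) a = Hm f (Hm g a)))"

text \<open>The natural system \<open>D = \<pi>\<^sup>*p\<^sup>*H\<close>: \<open>D\<^sub>f = H(t(f))\<close>, \<open>D(\<alpha>,\<beta>) = H(\<alpha>)\<close>.\<close>
definition pbH_obj :: "('o, 'm) cat \<Rightarrow> ('o \<Rightarrow> 'v set) \<Rightarrow> 'm \<Rightarrow> 'v set" where
  "pbH_obj C Hob f = Hob (Cod C f)"

definition pbH_map :: "('m \<Rightarrow> 'v \<Rightarrow> 'v) \<Rightarrow> 'm \<times> 'm \<Rightarrow> 'v \<Rightarrow> 'v" where
  "pbH_map Hm \<alpha>\<beta> = Hm (fst \<alpha>\<beta>)"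

text \<open>\<open>f\<^sub>* = D(f,1) : D\<^sub>g \<rightarrow> D\<^sub>f\<^sub>g\<close> and \<open>g\<^sup>* = D(1,g) : D\<^sub>f \<rightarrow> D\<^sub>f\<^sub>g\<close>.\<close>
definition lower_star :: "('o, 'm) cat \<Rightarrow> ('m \<Rightarrow> 'v \<Rightarrow> 'v) \<Rightarrow> 'm \<Rightarrow> 'm \<Rightarrow> 'v \<Rightarrow> 'v" where
  "lower_star C Hm f g = pbH_map Hm (f, Ide C (Dom C g))"

definition upper_star :: "('o, 'm) cat \<Rightarrow> ('m \<Rightarrow> 'v \<Rightarrow> 'v) \<Rightarrow> 'm \<Rightarrow> 'm \<Rightarrow> 'v \<Rightarrow> 'v" where
  "upper_star C Hm f g = pbH_map Hm (Ide C (Cod C f), g)"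

text \<open>\<open>D\<^sub>+ \<rightarrow> E \<rightarrow>q C\<close> with \<open>D = \<pi>\<^sup>*p\<^sup>*H\<close>; \<open>act e \<alpha>\<close> is \<open>e + \<alpha>\<close>.\<close>
definition linear_extension ::
  "('o, 'm) cat \<Rightarrow> ('o \<Rightarrow> 'v::ab_group_add set) \<Rightarrow> ('m \<Rightarrow> 'v \<Rightarrow> 'v) \<Rightarrow>
   ('o, 'e) cat \<Rightarrow> ('e \<Rightarrow> 'm) \<Rightarrow> ('e \<Rightarrow> 'v \<Rightarrow> 'e) \<Rightarrow> bool" where
  "linear_extension C Hob Hm E q act \<longleftrightarrow>
     is_category E \<and> Obj E = Obj C \<and>
     \<comment> \<open>q is a functor that is the identity on objects\<close>
     (\<forall>e\<in>Mor E. q e \<in> Mor C \<and> Dom C (q e) = Dom E e \<and> Cod C (q e) = Cod E e) \<and>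
     (\<forall>x\<in>Obj E. q (Ide E x) = Ide C x) \<and>
     (\<forall>a\<in>Mor E. \<forall>b\<in>Mor E. Dom E a = Cod E b \<longrightarrow> q (Comp E a b) = Comp C (q a) (q b)) \<and>
     \<comment> \<open>q is full\<close>
     (\<forall>f\<in>Mor C. \<exists>e\<in>Mor E. Dom E e = Dom C f \<and> Cod E e = Cod C f \<and> q e = f) \<and>
     \<comment> \<open>\<open>D\<^sub>f\<close> acts on \<open>q\<^sup>-\<^sup>1(f)\<close>\<close>
     (\<forall>e\<in>Mor E. \<forall>\<alpha>\<in>pbH_obj C Hob (q e). act e \<alpha> \<in> Mor E \<and> q (act e \<alpha>) = q e) \<and>
     (\<forall>e\<in>Mor E. act e 0 = e) \<and>
     (\<forall>e\<in>Mor E. \<forall>\<alpha>\<in>pbH_obj C Hob (q e). \<forall>\<beta>\<in>pbH_obj C Hob (q e).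
        act (act e \<alpha>) \<beta> = act e (\<alpha> + \<beta>)) \<and>
     \<comment> \<open>transitively and freely\<close>
     (\<forall>e\<in>Mor E. \<forall>e'\<in>Mor E. q e = q e' \<longrightarrow> (\<exists>!\<alpha>. \<alpha> \<in> pbH_obj C Hob (q e) \<and> act e \<alpha> = e')) \<and>
     \<comment> \<open>\<open>(f\<^sub>0+\<alpha>)(g\<^sub>0+\<beta>) = f\<^sub>0g\<^sub>0 + f\<^sub>*\<beta> + g\<^sup>*\<alpha>\<close>\<close>
     (\<forall>f0\<in>Mor E. \<forall>g0\<in>Mor E. Dom E f0 = Cod E g0 \<longrightarrow>
        (\<forall>\<alpha>\<in>pbH_obj C Hob (q f0). \<forall>\<beta>\<in>pbH_obj C Hob (q g0).
           Comp E (act f0 \<alpha>) (act g0 \<beta>) =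
             act (Comp E f0 g0) (lower_star C Hm (q f0) (q g0) \<beta> + upper_star C Hm (q f0) (q g0) \<alpha>)))"

definition ext_partition :: "('o, 'e) cat \<Rightarrow> ('e \<Rightarrow> 'm) \<Rightarrow> 'm set set \<Rightarrow> 'e set set" where
  "ext_partition E q S = (\<lambda>\<sigma>. {e \<in> Mor E. q e \<in> \<sigma>}) ` S"

text \<open>Elements of \<open>K C\<close> are functions \<open>Mor C \<rightarrow> K\<close> (zero outside \<open>Mor C\<close>; \<open>Mor C\<close> finite).\<close>
definition s_elem :: "'m set \<Rightarrow> 'm \<Rightarrow> 'k::field" where
  "s_elem \<sigma> = (\<lambda>h. if h \<in> \<sigma> then 1 else 0)"

definition schemoid_algebra :: "'m set set \<Rightarrow> ('m \<Rightarrow> 'k::field) set" where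
  "schemoid_algebra S = {a. \<exists>c. a = (\<lambda>h. \<Sum>\<sigma>\<in>S. c \<sigma> * s_elem \<sigma> h)}"

definition cat_alg_mult :: "('o, 'm) cat \<Rightarrow> ('m \<Rightarrow> 'k::field) \<Rightarrow> ('m \<Rightarrow> 'k) \<Rightarrow> 'm \<Rightarrow> 'k" where
  "cat_alg_mult C a b = (\<lambda>h. \<Sum>f\<in>Mor C. \<Sum>g\<in>Mor C.
      if Dom C f = Cod C g \<and> Comp C f g = h then a f * b g else 0)"

definition q_block :: "('e \<Rightarrow> 'm) \<Rightarrow> 'm set set \<Rightarrow> 'e set \<Rightarrow> 'm set" where
  "q_block q S \<pi> = (THE \<sigma>. \<sigma> \<in> S \<and> q ` \<pi> \<subseteq> \<sigma>)"

text \<open>\<open>n\<^sup>q\<^sub>\<pi>\<^sub>~ = #{f \<in> \<pi>~ | t(f) = x, q(f) = g}\<close> for (a chosen) \<open>g \<in> q(\<pi>~)\<close>, \<open>x = t(g)\<close>.\<close>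
definition n_q :: "('o, 'm) cat \<Rightarrow> ('o, 'e) cat \<Rightarrow> ('e \<Rightarrow> 'm) \<Rightarrow> 'm set set \<Rightarrow> 'e set \<Rightarrow> nat" where
  "n_q C E q S \<pi> = (let g = (SOME g. g \<in> q_block q S \<pi>)
                    in card {f \<in> \<pi>. Cod E f = Cod C g \<and> q f = g})"

text \<open>\<open>K(q) : K(E,S~) \<rightarrow> K(C,S)\<close>, the linear map with \<open>s\<^sub>\<pi>\<^sub>~ \<mapsto> n\<^sup>q\<^sub>\<pi>\<^sub>~ s\<^sub>q\<^sub>(\<pi>\<^sub>~\<^sub>)\<close>;
  the coefficient of \<open>s\<^sub>\<pi>\<^sub>~\<close> in \<open>a\<close> is the value of \<open>a\<close> on any element of \<open>\<pi>~\<close>.\<close>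
definition K_q :: "('o, 'm) cat \<Rightarrow> ('o, 'e) cat \<Rightarrow> ('e \<Rightarrow> 'm) \<Rightarrow> 'm set set \<Rightarrow>
                   ('e \<Rightarrow> 'k::field) \<Rightarrow> 'm \<Rightarrow> 'k" where
  "K_q C E q S a = (\<lambda>h. \<Sum>\<pi>\<in>ext_partition E q S.
       a (SOME e. e \<in> \<pi>) * of_nat (n_q C E q S \<pi>) * s_elem (q_block q S \<pi>) h)"

text \<open>Isomorphism of (not necessarily unital) algebras between the given subalgebras.\<close>
definition alg_iso_between ::
  "('o, 'e) cat \<Rightarrow> ('e \<Rightarrow> 'k::field) set \<Rightarrow> ('o, 'm) cat \<Rightarrow> ('m \<Rightarrow> 'k) set \<Rightarrow>
   (('e \<Rightarrow> 'k) \<Rightarrow> ('m \<Rightarrow> 'k)) \<Rightarrow> bool" where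
  "alg_iso_between E A C B \<phi> \<longleftrightarrow> bij_betw \<phi> A B \<and>
     (\<forall>a\<in>A. \<forall>b\<in>A. \<phi> (\<lambda>h. a h + b h) = (\<lambda>h. \<phi> a h + \<phi> b h)) \<and>
     (\<forall>c. \<forall>a\<in>A. \<phi> (\<lambda>h. c * a h) = (\<lambda>h. c * \<phi> a h)) \<and>
     (\<forall>a\<in>A. \<forall>b\<in>A. \<phi> (cat_alg_mult E a b) = cat_alg_mult C (\<phi> a) (\<phi> b))"

end

theory Submission
  imports Defs
begin

lemma sum_s_elem_in:
  assumes part: "is_partition M P" and fin: "finite P" and p0: "p0 \<in> P" and h: "h \<in> p0"
  shows "(\<Sum>p\<in>P. c p * (s_elem p h :: 'k::field)) = c p0"
proof -
  have "(\<Sum>p\<in>P. c p * (s_elem p h :: 'k)) = c p0 * s_elem p0 h + (\<Sum>p\<in>P - {p0}. c p * s_elem p h)"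
    using fin p0 by (simp add: sum.remove)
  also have "(\<Sum>p\<in>P - {p0}. c p * (s_elem p h :: 'k)) = 0"
  proof (rule sum.neutral)
    show "\<forall>p\<in>P - {p0}. c p * (s_elem p h :: 'k) = 0"
    proof
      fix p assume "p \<in> P - {p0}"
      then have "p \<inter> p0 = {}" using part p0 unfolding is_partition_def by blast
      then show "c p * (s_elem p h :: 'k) = 0" using h by (auto simp: s_elem_def)
    qed
  qed
  finally show ?thesis using h by (simp add: s_elem_def)
qed

lemma sum_s_elem_out:
  assumes part: "is_partition M P" and h: "h \<notin> M"
  shows "(\<Sum>p\<in>P. c p * (s_elem p h :: 'k::field)) = 0"
  using part h unfolding is_partition_def s_elem_def by (intro sum.neutral) auto

lemma sa_char:
  assumes part: "is_partition M P" and fin: "finite P"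
  shows "(a :: 'm \<Rightarrow> 'k::field) \<in> schemoid_algebra P \<longleftrightarrow>
     (\<forall>h. h \<notin> M \<longrightarrow> a h = 0) \<and> (\<forall>p\<in>P. \<forall>x\<in>p. \<forall>y\<in>p. a x = a y)"
proof
  assume "a \<in> schemoid_algebra P"
  then obtain c where a: "a = (\<lambda>h. \<Sum>p\<in>P. c p * s_elem p h)" unfolding schemoid_algebra_def by blast
  show "(\<forall>h. h \<notin> M \<longrightarrow> a h = 0) \<and> (\<forall>p\<in>P. \<forall>x\<in>p. \<forall>y\<in>p. a x = a y)"
  proof (intro conjI allI impI ballI)
    fix h assume "h \<notin> M" then show "a h = 0" unfolding a by (rule sum_s_elem_out[OF part])
  next
    fix p x y assume pxy: "p \<in> P" "x \<in> p" "y \<in> p"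
    show "a x = a y" unfolding a
      by (simp only: sum_s_elem_in[OF part fin pxy(1) pxy(2)] sum_s_elem_in[OF part fin pxy(1) pxy(3)])
  qed
next
  assume R: "(\<forall>h. h \<notin> M \<longrightarrow> a h = 0) \<and> (\<forall>p\<in>P. \<forall>x\<in>p. \<forall>y\<in>p. a x = a y)"
  define c where "c p = a (SOME x. x \<in> p)" for p
  have "a = (\<lambda>h. \<Sum>p\<in>P. c p * s_elem p h)"
  proof
    fix h
    show "a h = (\<Sum>p\<in>P. c p * s_elem p h)"
    proof (cases "h \<in> M")
      case True
      then obtain p0 where p0: "p0 \<in> P" "h \<in> p0" using part unfolding is_partition_def by blast
      then have "(SOME x. x \<in> p0) \<in> p0" by (meson someI)
      then have "c p0 = a h" using R p0 unfolding c_def by blast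
      moreover have "(\<Sum>p\<in>P. c p * s_elem p h) = c p0" by (rule sum_s_elem_in[OF part fin p0])
      ultimately show ?thesis by simp
    next
      case False
      moreover have "(\<Sum>p\<in>P. c p * s_elem p h) = 0" using False by (rule sum_s_elem_out[OF part])
      ultimately show ?thesis using R by simp
    qed
  qed
  then show "a \<in> schemoid_algebra P" unfolding schemoid_algebra_def by blast
qed

lemma ex1_eq: "\<exists>!a. P a \<Longrightarrow> P x \<Longrightarrow> P y \<Longrightarrow> x = y"
  by blast

locale lxt =
  fixes C :: "('o, 'm) cat" and S :: "'m set set" and T :: "'m \<Rightarrow> 'm"
    and Hob :: "'o \<Rightarrow> 'v::ab_group_add set" and Hm :: "'m \<Rightarrow> 'v \<Rightarrow> 'v"
    and E :: "('o, 'e) cat" and q :: "'e \<Rightarrow> 'm" and act :: "'e \<Rightarrow> 'v \<Rightarrow> 'e"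
  assumes catC: "is_category C"
    and part: "is_partition (Mor C) S"
    and finC: "finite (Mor C)"
    and qs: "\<forall>\<sigma>\<in>S. \<forall>\<tau>\<in>S. \<forall>\<mu>\<in>S. \<forall>f\<in>\<mu>. \<forall>g\<in>\<mu>.
        card (structure_pairs C \<sigma> \<tau> f) = card (structure_pairs C \<sigma> \<tau> g)"
    and Tmor: "\<forall>f\<in>Mor C. T f \<in> Mor C"
    and T_inv: "\<forall>f\<in>Mor C. Dom C (T f) = Cod C f \<and> Cod C (T f) = Dom C f \<and>
                   Comp C (T f) f = Ide C (Dom C f) \<and> Comp C f (T f) = Ide C (Cod C f)"
    and H0: "\<forall>x\<in>Obj C. 0 \<in> Hob x"
    and Hmap: "\<forall>f\<in>Mor C. \<forall>a\<in>Hob (Dom C f). Hm f a \<in> Hob (Cod C f)"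
    and Hadd: "\<forall>f\<in>Mor C. \<forall>a\<in>Hob (Dom C f). \<forall>b\<in>Hob (Dom C f). Hm f (a + b) = Hm f a + Hm f b"
    and Hid: "\<forall>x\<in>Obj C. \<forall>a\<in>Hob x. Hm (Ide C x) a = a"
    and Hcomp: "\<forall>f\<in>Mor C. \<forall>g\<in>Mor C. Dom C f = Cod C g \<longrightarrow>
        (\<forall>a\<in>Hob (Dom C g). Hm (Comp C f g) a = Hm f (Hm g a))"
    and D_fin: "\<forall>g\<in>Mor C. finite (pbH_obj C Hob g)"
    and ext: "linear_extension C Hob Hm E q act"
    and conn: "connected_cat C"
begin

lemma hcomp: "f \<in> Mor C \<Longrightarrow> g \<in> Mor C \<Longrightarrow> Dom C f = Cod C g \<Longrightarrow> a \<in> Hob (Dom C g) \<Longrightarrow>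
   Hm (Comp C f g) a = Hm f (Hm g a)"
  using Hcomp by blast

lemma hid: "x \<in> Obj C \<Longrightarrow> a \<in> Hob x \<Longrightarrow> Hm (Ide C x) a = a"
  using Hid by blast

lemma hmap: "f \<in> Mor C \<Longrightarrow> a \<in> Hob (Dom C f) \<Longrightarrow> Hm f a \<in> Hob (Cod C f)"
  using Hmap by blast

lemma finS: "finite S"
proof -
  have "S \<subseteq> Pow (Mor C)" using part unfolding is_partition_def by blast
  then show ?thesis using finC by (meson finite_Pow_iff finite_subset)
qed

lemma domC: "f \<in> Mor C \<Longrightarrow> Dom C f \<in> Obj C" and codC: "f \<in> Mor C \<Longrightarrow> Cod C f \<in> Obj C"
  using catC unfolding is_category_def by auto

lemma ideC: "x \<in> Obj C \<Longrightarrow> Ide C x \<in> Mor C \<and> Dom C (Ide C x) = x \<and> Cod C (Ide C x) = x"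
  using catC unfolding is_category_def by auto

lemma compC: "f \<in> Mor C \<Longrightarrow> g \<in> Mor C \<Longrightarrow> Dom C f = Cod C g \<Longrightarrow>
    Comp C f g \<in> Mor C \<and> Dom C (Comp C f g) = Dom C g \<and> Cod C (Comp C f g) = Cod C f"
  using catC unfolding is_category_def by auto

lemma ext_parts1: "is_category E"
  using ext unfolding linear_extension_def by (elim conjE) assumption

lemma ext_parts2: "\<forall>e\<in>Mor E. q e \<in> Mor C \<and> Dom C (q e) = Dom E e \<and> Cod C (q e) = Cod E e"
  using ext unfolding linear_extension_def by (elim conjE) assumption

lemma ext_parts3: "\<forall>a\<in>Mor E. \<forall>b\<in>Mor E. Dom E a = Cod E b \<longrightarrow> q (Comp E a b) = Comp C (q a) (q b)"
  using ext unfolding linear_extension_def by (elim conjE) assumption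

lemma ext_parts4: "\<forall>f\<in>Mor C. \<exists>e\<in>Mor E. Dom E e = Dom C f \<and> Cod E e = Cod C f \<and> q e = f"
  using ext unfolding linear_extension_def by (elim conjE) assumption

lemma ext_parts5: "\<forall>e\<in>Mor E. \<forall>\<alpha>\<in>pbH_obj C Hob (q e). act e \<alpha> \<in> Mor E \<and> q (act e \<alpha>) = q e"
  using ext unfolding linear_extension_def by (elim conjE) assumption

lemma ext_parts6: "\<forall>e\<in>Mor E. act e 0 = e"
  using ext unfolding linear_extension_def by (elim conjE) assumption

lemma ext_parts7: "\<forall>e\<in>Mor E. \<forall>e'\<in>Mor E. q e = q e' \<longrightarrow> (\<exists>!\<alpha>. \<alpha> \<in> pbH_obj C Hob (q e) \<and> act e \<alpha> = e')"
  using ext unfolding linear_extension_def by (elim conjE) assumption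

lemma ext_parts8: "\<forall>f0\<in>Mor E. \<forall>g0\<in>Mor E. Dom E f0 = Cod E g0 \<longrightarrow>
        (\<forall>\<alpha>\<in>pbH_obj C Hob (q f0). \<forall>\<beta>\<in>pbH_obj C Hob (q g0).
           Comp E (act f0 \<alpha>) (act g0 \<beta>) =
             act (Comp E f0 g0) (lower_star C Hm (q f0) (q g0) \<beta> + upper_star C Hm (q f0) (q g0) \<alpha>))"
  using ext unfolding linear_extension_def by (elim conjE) assumption

lemma compE: "f \<in> Mor E \<Longrightarrow> g \<in> Mor E \<Longrightarrow> Dom E f = Cod E g \<Longrightarrow> Comp E f g \<in> Mor E"
  using ext_parts1 unfolding is_category_def by blast

lemma qmor: "e \<in> Mor E \<Longrightarrow> q e \<in> Mor C \<and> Dom C (q e) = Dom E e \<and> Cod C (q e) = Cod E e"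
  using ext_parts2 by blast

lemma qcomp: "a \<in> Mor E \<Longrightarrow> b \<in> Mor E \<Longrightarrow> Dom E a = Cod E b \<Longrightarrow> q (Comp E a b) = Comp C (q a) (q b)"
  using ext_parts3 by blast

lemma full: "f \<in> Mor C \<Longrightarrow> \<exists>e\<in>Mor E. q e = f"
  using ext_parts4 by blast

lemma actin: "e \<in> Mor E \<Longrightarrow> \<alpha> \<in> Hob (Cod C (q e)) \<Longrightarrow> act e \<alpha> \<in> Mor E \<and> q (act e \<alpha>) = q e"
  using ext_parts5 unfolding pbH_obj_def by blast

lemma act0: "e \<in> Mor E \<Longrightarrow> act e 0 = e"
  using ext_parts6 by blast

lemma tf: "e \<in> Mor E \<Longrightarrow> e' \<in> Mor E \<Longrightarrow> q e = q e' \<Longrightarrow> \<exists>!\<alpha>. \<alpha> \<in> Hob (Cod C (q e)) \<and> act e \<alpha> = e'"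
proof -
  assume "e \<in> Mor E" "e' \<in> Mor E" "q e = q e'"
  then have "\<exists>!\<alpha>. \<alpha> \<in> pbH_obj C Hob (q e) \<and> act e \<alpha> = e'" using ext_parts7 by blast
  then show ?thesis unfolding pbH_obj_def .
qed

lemma actcomp: "f0 \<in> Mor E \<Longrightarrow> g0 \<in> Mor E \<Longrightarrow> Dom E f0 = Cod E g0 \<Longrightarrow>
   \<alpha> \<in> Hob (Cod C (q f0)) \<Longrightarrow> \<beta> \<in> Hob (Cod C (q g0)) \<Longrightarrow>
   Comp E (act f0 \<alpha>) (act g0 \<beta>) =
             act (Comp E f0 g0) (lower_star C Hm (q f0) (q g0) \<beta> + upper_star C Hm (q f0) (q g0) \<alpha>)"
  using ext_parts8 unfolding pbH_obj_def by blast

definition fib :: "'m \<Rightarrow> 'e set" where "fib g = {e \<in> Mor E. q e = g}"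

lemma fib_bij:
  assumes g: "g \<in> Mor C" and e0: "e0 \<in> fib g"
  shows "bij_betw (act e0) (Hob (Cod C g)) (fib g)"
proof -
  have e0E: "e0 \<in> Mor E" and qe0: "q e0 = g" using e0 unfolding fib_def by auto
  show ?thesis unfolding bij_betw_def
  proof (intro conjI)
    show "inj_on (act e0) (Hob (Cod C g))"
    proof (rule inj_onI)
      fix x y assume x: "x \<in> Hob (Cod C g)" and y: "y \<in> Hob (Cod C g)" and eq: "act e0 x = act e0 y"
      have xm: "act e0 x \<in> Mor E" "q (act e0 x) = q e0" using actin[OF e0E] x qe0 by auto
      from tf[OF e0E xm(1) xm(2)[symmetric]] have "\<exists>!\<alpha>. \<alpha> \<in> Hob (Cod C (q e0)) \<and> act e0 \<alpha> = act e0 x" .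
      then show "x = y" by (rule ex1_eq) (use x y eq qe0 in auto)
    qed
    show "act e0 ` Hob (Cod C g) = fib g"
    proof
      show "act e0 ` Hob (Cod C g) \<subseteq> fib g" using actin[OF e0E] qe0 unfolding fib_def by auto
      show "fib g \<subseteq> act e0 ` Hob (Cod C g)"
      proof
        fix e assume "e \<in> fib g"
        then have "e \<in> Mor E" "q e0 = q e" using qe0 unfolding fib_def by auto
        from tf[OF e0E this] show "e \<in> act e0 ` Hob (Cod C g)" using qe0 by blast
      qed
    qed
  qed
qed

lemma fib_ne: "g \<in> Mor C \<Longrightarrow> \<exists>e0. e0 \<in> fib g"
proof -
  assume "g \<in> Mor C"
  then obtain e where "e \<in> Mor E" "q e = g" using full by blast
  then show ?thesis unfolding fib_def by blast
qed

lemma card_fib: "g \<in> Mor C \<Longrightarrow> card (fib g) = card (Hob (Cod C g)) \<and> finite (fib g)"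
proof -
  assume g: "g \<in> Mor C"
  obtain e0 where "e0 \<in> fib g" using fib_ne[OF g] by blast
  from fib_bij[OF g this] have b: "bij_betw (act e0) (Hob (Cod C g)) (fib g)" .
  have "finite (Hob (Cod C g))" using D_fin g unfolding pbH_obj_def by auto
  moreover have "card (Hob (Cod C g)) = card (fib g)" using b by (rule bij_betw_same_card)
  moreover have "finite (fib g)" using b \<open>finite (Hob (Cod C g))\<close> by (simp add: bij_betw_finite)
  ultimately show ?thesis by simp
qed

lemma finE: "finite (Mor E)"
proof -
  have "Mor E \<subseteq> (\<Union>g\<in>Mor C. fib g)" using qmor unfolding fib_def by auto
  moreover have "finite (\<Union>g\<in>Mor C. fib g)"
  proof (rule finite_UN_I[OF finC])
    fix g assume "g \<in> Mor C" then show "finite (fib g)" using card_fib by blast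
  qed
  ultimately show ?thesis by (rule finite_subset)
qed

lemma card_Hob_edge: "f \<in> Mor C \<Longrightarrow> card (Hob (Dom C f)) = card (Hob (Cod C f))"
proof -
  assume f: "f \<in> Mor C"
  have Tf: "T f \<in> Mor C" "Dom C (T f) = Cod C f" "Cod C (T f) = Dom C f"
     "Comp C (T f) f = Ide C (Dom C f)" "Comp C f (T f) = Ide C (Cod C f)" using Tmor T_inv f by auto
  have "bij_betw (Hm f) (Hob (Dom C f)) (Hob (Cod C f))"
  proof (rule bij_betw_byWitness[where f' = "Hm (T f)"])
    show "\<forall>a\<in>Hob (Dom C f). Hm (T f) (Hm f a) = a"
    proof
      fix a assume a: "a \<in> Hob (Dom C f)"
      have "Hm (Comp C (T f) f) a = Hm (T f) (Hm f a)" using hcomp[OF Tf(1) f Tf(2)] a by simp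
      moreover have "Hm (Comp C (T f) f) a = a" using Tf(4) hid[OF domC[OF f] a] by simp
      ultimately show "Hm (T f) (Hm f a) = a" by simp
    qed
    show "\<forall>a'\<in>Hob (Cod C f). Hm f (Hm (T f) a') = a'"
    proof
      fix a assume a: "a \<in> Hob (Cod C f)"
      have "Hm (Comp C f (T f)) a = Hm f (Hm (T f) a)" using hcomp[OF f Tf(1) Tf(3)[symmetric]] a Tf(2) by simp
      moreover have "Hm (Comp C f (T f)) a = a" using Tf(5) hid[OF codC[OF f] a] by simp
      ultimately show "Hm f (Hm (T f) a) = a" by simp
    qed
    show "Hm f ` Hob (Dom C f) \<subseteq> Hob (Cod C f)" using hmap[OF f] by auto
    show "Hm (T f) ` Hob (Cod C f) \<subseteq> Hob (Dom C f)" using hmap[OF Tf(1)] Tf(2,3) by auto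
  qed
  then show ?thesis by (rule bij_betw_same_card)
qed

definition x0 :: 'o where "x0 = (SOME x. x \<in> Obj C)"
definition N :: nat where "N = card (Hob x0)"

lemma x0_obj: "x0 \<in> Obj C"
proof -
  have "Obj C \<noteq> {}" using conn unfolding connected_cat_def by blast
  then show ?thesis unfolding x0_def by (simp add: some_in_eq)
qed

lemma card_Hob: "x \<in> Obj C \<Longrightarrow> card (Hob x) = N"
proof -
  assume x: "x \<in> Obj C"
  let ?R = "{(Dom C f, Cod C f) | f. f \<in> Mor C} \<union> {(Cod C f, Dom C f) | f. f \<in> Mor C}"
  have "(x0, x) \<in> ?R\<^sup>*" using conn x x0_obj unfolding connected_cat_def by blast
  then show ?thesis
  proof (induction rule: rtrancl_induct)
    case base then show ?case unfolding N_def by simp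
  next
    case (step y z)
    then show ?case using card_Hob_edge by auto
  qed
qed

lemma card_fibN: "g \<in> Mor C \<Longrightarrow> card (fib g) = N"
  using card_fib card_Hob codC by auto

lemma card_D: "g \<in> Mor C \<Longrightarrow> card (pbH_obj C Hob g) = N"
  using card_Hob codC unfolding pbH_obj_def by auto

lemma hzero: "f \<in> Mor C \<Longrightarrow> Hm f 0 = 0"
proof -
  assume f: "f \<in> Mor C"
  have z: "0 \<in> Hob (Dom C f)" using H0 domC[OF f] by blast
  have "Hm f (0 + 0) = Hm f 0 + Hm f 0" using Hadd f z by blast
  then show ?thesis by simp
qed

lemma unique_a:
  assumes f1: "f1 \<in> Mor C" and f2: "f2 \<in> Mor C" and d: "Dom C f1 = Cod C f2"
    and e: "e \<in> Mor E" and qe: "q e = Comp C f1 f2" and b: "b \<in> fib f2"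
  shows "\<exists>!a. a \<in> fib f1 \<and> Comp E a b = e"
proof -
  obtain a0 where a0: "a0 \<in> Mor E" "q a0 = f1" using full[OF f1] by blast
  have bE: "b \<in> Mor E" and qb: "q b = f2" using b unfolding fib_def by auto
  have dab: "Dom E a0 = Cod E b" using qmor[OF a0(1)] qmor[OF bE] a0(2) qb d by simp
  define e0 where "e0 = Comp E a0 b"
  have e0E: "e0 \<in> Mor E" unfolding e0_def using compE[OF a0(1) bE dab] .
  have qe0: "q e0 = Comp C f1 f2" unfolding e0_def using qcomp[OF a0(1) bE dab] a0(2) qb by simp
  have codc: "Cod C (Comp C f1 f2) = Cod C f1" using compC[OF f1 f2 d] by simp
  have key: "Comp E (act a0 \<alpha>) b = act e0 \<alpha>" if al: "\<alpha> \<in> Hob (Cod C f1)" for \<alpha>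
  proof -
    have z: "0 \<in> Hob (Cod C (q b))" using H0 codC[OF f2] qb by simp
    have "Comp E (act a0 \<alpha>) (act b 0) =
       act e0 (lower_star C Hm (q a0) (q b) 0 + upper_star C Hm (q a0) (q b) \<alpha>)"
      unfolding e0_def using actcomp[OF a0(1) bE dab _ z] al a0(2) by simp
    moreover have "lower_star C Hm (q a0) (q b) 0 = 0"
      unfolding lower_star_def pbH_map_def using hzero[OF f1] a0(2) by simp
    moreover have "upper_star C Hm (q a0) (q b) \<alpha> = \<alpha>"
      unfolding upper_star_def pbH_map_def using hid[OF codC[OF f1] al] a0(2) by simp
    moreover have "act b 0 = b" using act0[OF bE] .
    ultimately show ?thesis by simp
  qed
  have E1: "\<exists>!\<gamma>. \<gamma> \<in> Hob (Cod C (q e0)) \<and> act e0 \<gamma> = e" using tf[OF e0E e] qe0 qe by simp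
  then obtain \<gamma> where g: "\<gamma> \<in> Hob (Cod C f1)" "act e0 \<gamma> = e" using qe0 codc by auto
  show ?thesis
  proof (rule ex1I[where a = "act a0 \<gamma>"])
    show "act a0 \<gamma> \<in> fib f1 \<and> Comp E (act a0 \<gamma>) b = e"
      using actin[OF a0(1)] g a0(2) key[OF g(1)] unfolding fib_def by simp
  next
    fix a assume a: "a \<in> fib f1 \<and> Comp E a b = e"
    have aE: "a \<in> Mor E" "q a0 = q a" using a a0 unfolding fib_def by auto
    obtain \<alpha> where al: "\<alpha> \<in> Hob (Cod C f1)" "act a0 \<alpha> = a" using tf[OF a0(1) aE] a0(2) by auto
    have "act e0 \<alpha> = e" using key[OF al(1)] al(2) a by simp
    have "\<alpha> = \<gamma>" by (rule ex1_eq[OF E1]) (use al \<open>act e0 \<alpha> = e\<close> g qe0 codc in simp_all)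
    then show "a = act a0 \<gamma>" using al by simp
  qed
qed

definition lift :: "('m \<Rightarrow> 'k::field) \<Rightarrow> 'e \<Rightarrow> 'k" where
  "lift b = (\<lambda>e. if e \<in> Mor E then b (q e) else 0)"

lemma sum_unique:
  assumes fin: "finite A" and u: "\<exists>!a. a \<in> A \<and> P a"
  shows "(\<Sum>a\<in>A. if P a then v else 0) = (v :: 'k::field)"
proof -
  obtain a0 where a0: "a0 \<in> A" "P a0" and un: "\<And>a. a \<in> A \<and> P a \<Longrightarrow> a = a0" using u by blast
  have "{a \<in> A. P a} = {a0}" using a0 un by blast
  have "(\<Sum>a\<in>A. if P a then v else 0) = (\<Sum>a\<in>{a \<in> A. P a}. v)"
    using sum.inter_filter[OF fin, of "\<lambda>_. v" P] by simp
  also have "\<dots> = v" using \<open>{a \<in> A. P a} = {a0}\<close> by simp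
  finally show ?thesis .
qed

lemma sum_fib:
  "(\<Sum>e\<in>Mor E. F e) = (\<Sum>g\<in>Mor C. \<Sum>e\<in>fib g. F e)"
proof -
  have "(\<Sum>g\<in>Mor C. \<Sum>e\<in>{x. x \<in> Mor E \<and> q x = g}. F e) = (\<Sum>e\<in>Mor E. F e)"
    by (rule sum.group[OF finE finC]) (use qmor in auto)
  then show ?thesis unfolding fib_def by simp
qed

lemma inner_sum:
  assumes e: "e \<in> Mor E" and bE: "b \<in> Mor E" and f1: "f1 \<in> Mor C"
  shows "(\<Sum>a\<in>fib f1. if Dom E a = Cod E b \<and> Comp E a b = e then b1 (q a) * b2 (q b) else 0)
     = (if Dom C f1 = Cod C (q b) \<and> Comp C f1 (q b) = q e then b1 f1 * b2 (q b) else (0::'k::field))"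
proof -
  have fin: "finite (fib f1)" using card_fib[OF f1] by blast
  have dom_a: "\<And>a. a \<in> fib f1 \<Longrightarrow> Dom E a = Dom C f1 \<and> q a = f1 \<and> a \<in> Mor E"
    using qmor unfolding fib_def by auto
  have codb: "Cod E b = Cod C (q b)" using qmor[OF bE] by simp
  show ?thesis
  proof (cases "Dom C f1 = Cod C (q b) \<and> Comp C f1 (q b) = q e")
    case True
    have "(\<Sum>a\<in>fib f1. if Dom E a = Cod E b \<and> Comp E a b = e then b1 (q a) * b2 (q b) else 0)
        = (\<Sum>a\<in>fib f1. if Comp E a b = e then b1 f1 * b2 (q b) else 0)"
      by (rule sum.cong) (use dom_a codb True in auto)
    also have "\<dots> = b1 f1 * b2 (q b)"
    proof (rule sum_unique[OF fin])
      have "b \<in> fib (q b)" using bE unfolding fib_def by simp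
      from unique_a[OF f1 qmor[THEN conjunct1, OF bE] _ e _ this] True
      show "\<exists>!a. a \<in> fib f1 \<and> Comp E a b = e" by simp
    qed
    finally show ?thesis using True by simp
  next
    case False
    have "(\<Sum>a\<in>fib f1. if Dom E a = Cod E b \<and> Comp E a b = e then b1 (q a) * b2 (q b) else 0) = 0"
    proof (rule sum.neutral, rule ballI)
      fix a assume a: "a \<in> fib f1"
      show "(if Dom E a = Cod E b \<and> Comp E a b = e then b1 (q a) * b2 (q b) else 0) = 0"
      proof (cases "Dom E a = Cod E b \<and> Comp E a b = e")
        case True
        then have "q e = Comp C f1 (q b)" using qcomp[of a b] dom_a[OF a] bE by auto
        then show ?thesis using False True dom_a[OF a] codb by auto
      next
        case F2: False
        show ?thesis using F2 by (rule if_not_P)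
      qed
    qed
    moreover have "(if Dom C f1 = Cod C (q b) \<and> Comp C f1 (q b) = q e then b1 f1 * b2 (q b) else (0::'k)) = 0"
      using False by (rule if_not_P)
    ultimately show ?thesis by simp
  qed
qed

lemma mult_lift:
  assumes e: "e \<in> Mor E"
  shows "cat_alg_mult E (lift b1) (lift b2) e = of_nat N * cat_alg_mult C b1 b2 (q e)"
proof -
  let ?G = "\<lambda>f1 f2. if Dom C f1 = Cod C f2 \<and> Comp C f1 f2 = q e then b1 f1 * b2 f2 else 0"
  have "cat_alg_mult E (lift b1) (lift b2) e =
     (\<Sum>a\<in>Mor E. \<Sum>b\<in>Mor E. if Dom E a = Cod E b \<and> Comp E a b = e then b1 (q a) * b2 (q b) else 0)"
    unfolding cat_alg_mult_def lift_def by (intro sum.cong refl) auto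
  also have "\<dots> = (\<Sum>b\<in>Mor E. \<Sum>a\<in>Mor E. if Dom E a = Cod E b \<and> Comp E a b = e then b1 (q a) * b2 (q b) else 0)"
    by (rule sum.swap)
  also have "\<dots> = (\<Sum>b\<in>Mor E. \<Sum>f1\<in>Mor C. ?G f1 (q b))"
  proof (rule sum.cong[OF refl])
    fix b assume bE: "b \<in> Mor E"
    show "(\<Sum>a\<in>Mor E. if Dom E a = Cod E b \<and> Comp E a b = e then b1 (q a) * b2 (q b) else 0)
        = (\<Sum>f1\<in>Mor C. ?G f1 (q b))"
      unfolding sum_fib by (intro sum.cong refl, rule inner_sum[OF e bE], assumption)
  qed
  also have "\<dots> = (\<Sum>f2\<in>Mor C. \<Sum>b\<in>fib f2. \<Sum>f1\<in>Mor C. ?G f1 (q b))"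
    by (rule sum_fib)
  also have "\<dots> = (\<Sum>f2\<in>Mor C. of_nat N * (\<Sum>f1\<in>Mor C. ?G f1 f2))"
  proof (rule sum.cong[OF refl])
    fix f2 assume f2: "f2 \<in> Mor C"
    have "(\<Sum>b\<in>fib f2. \<Sum>f1\<in>Mor C. ?G f1 (q b)) = (\<Sum>b\<in>fib f2. \<Sum>f1\<in>Mor C. ?G f1 f2)"
      unfolding fib_def by (intro sum.cong refl) auto
    also have "\<dots> = of_nat (card (fib f2)) * (\<Sum>f1\<in>Mor C. ?G f1 f2)" by simp
    finally show "(\<Sum>b\<in>fib f2. \<Sum>f1\<in>Mor C. ?G f1 (q b)) = of_nat N * (\<Sum>f1\<in>Mor C. ?G f1 f2)"
      using card_fibN[OF f2] by simp
  qed
  also have "\<dots> = of_nat N * (\<Sum>f2\<in>Mor C. \<Sum>f1\<in>Mor C. ?G f1 f2)"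
    by (simp add: sum_distrib_left)
  also have "\<dots> = of_nat N * cat_alg_mult C b1 b2 (q e)"
    unfolding cat_alg_mult_def by (subst sum.swap) simp
  finally show ?thesis .
qed

lemma mult_out: "e \<notin> Mor E \<Longrightarrow> cat_alg_mult E x y e = 0"
  unfolding cat_alg_mult_def by (intro sum.neutral ballI) (use compE in auto)

lemma mult_lift_eq: "cat_alg_mult E (lift b1) (lift b2) = lift (\<lambda>h. of_nat N * cat_alg_mult C b1 b2 h)"
proof
  fix e show "cat_alg_mult E (lift b1) (lift b2) e = lift (\<lambda>h. of_nat N * cat_alg_mult C b1 b2 h) e"
    using mult_lift mult_out unfolding lift_def by auto
qed

definition PB :: "'m set \<Rightarrow> 'e set" where "PB \<sigma> = {e \<in> Mor E. q e \<in> \<sigma>}"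

lemma blk_sub: "\<sigma> \<in> S \<Longrightarrow> \<sigma> \<subseteq> Mor C"
  using part unfolding is_partition_def by blast

lemma blk_ne: "\<sigma> \<in> S \<Longrightarrow> \<sigma> \<noteq> {}"
  using part unfolding is_partition_def by blast

lemma blk_disj: "\<sigma> \<in> S \<Longrightarrow> \<tau> \<in> S \<Longrightarrow> \<sigma> \<noteq> \<tau> \<Longrightarrow> \<sigma> \<inter> \<tau> = {}"
  using part unfolding is_partition_def by blast

lemma blk_cover: "f \<in> Mor C \<Longrightarrow> \<exists>\<sigma>\<in>S. f \<in> \<sigma>"
  using part unfolding is_partition_def by blast

lemma qimg: "\<sigma> \<in> S \<Longrightarrow> q ` PB \<sigma> = \<sigma>"
proof
  assume s: "\<sigma> \<in> S"
  show "q ` PB \<sigma> \<subseteq> \<sigma>" unfolding PB_def by auto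
  show "\<sigma> \<subseteq> q ` PB \<sigma>"
  proof
    fix f assume f: "f \<in> \<sigma>"
    then have "f \<in> Mor C" using blk_sub[OF s] by blast
    then obtain e where "e \<in> Mor E" "q e = f" using full by blast
    then show "f \<in> q ` PB \<sigma>" using f unfolding PB_def by blast
  qed
qed

lemma PB_ne: "\<sigma> \<in> S \<Longrightarrow> PB \<sigma> \<noteq> {}"
  using qimg blk_ne by fastforce

lemma ext_eq: "ext_partition E q S = PB ` S"
  unfolding ext_partition_def PB_def by simp

lemma inj_PB: "inj_on PB S"
proof (rule inj_onI)
  fix \<sigma> \<tau> assume "\<sigma> \<in> S" "\<tau> \<in> S" "PB \<sigma> = PB \<tau>"
  then show "\<sigma> = \<tau>" using qimg by metis
qed

lemma ext_part: "is_partition (Mor E) (ext_partition E q S)"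
  unfolding is_partition_def ext_eq
proof (intro conjI)
  show "\<forall>\<pi>\<in>PB ` S. \<pi> \<noteq> {}" using PB_ne by blast
  show "\<Union> (PB ` S) = Mor E"
  proof
    show "\<Union> (PB ` S) \<subseteq> Mor E" unfolding PB_def by blast
    show "Mor E \<subseteq> \<Union> (PB ` S)"
    proof
      fix e assume e: "e \<in> Mor E"
      then obtain \<sigma> where "\<sigma> \<in> S" "q e \<in> \<sigma>" using blk_cover qmor by blast
      then show "e \<in> \<Union> (PB ` S)" using e unfolding PB_def by blast
    qed
  qed
  show "\<forall>\<pi>\<in>PB ` S. \<forall>\<pi>'\<in>PB ` S. \<pi> \<noteq> \<pi>' \<longrightarrow> \<pi> \<inter> \<pi>' = {}"
  proof (intro ballI impI)
    fix \<pi> \<pi>' assume "\<pi> \<in> PB ` S" "\<pi>' \<in> PB ` S" "\<pi> \<noteq> \<pi>'"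
    then obtain \<sigma> \<tau> where st: "\<sigma> \<in> S" "\<tau> \<in> S" "\<pi> = PB \<sigma>" "\<pi>' = PB \<tau>" "\<sigma> \<noteq> \<tau>" by blast
    then have "\<sigma> \<inter> \<tau> = {}" using blk_disj by blast
    then show "\<pi> \<inter> \<pi>' = {}" using st unfolding PB_def by blast
  qed
qed

lemma ext_fin: "finite (ext_partition E q S)"
  unfolding ext_eq using finS by simp

lemma Bchar: "(b :: 'm \<Rightarrow> 'k::field) \<in> schemoid_algebra S \<longleftrightarrow>
     (\<forall>h. h \<notin> Mor C \<longrightarrow> b h = 0) \<and> (\<forall>\<sigma>\<in>S. \<forall>x\<in>\<sigma>. \<forall>y\<in>\<sigma>. b x = b y)"
  by (rule sa_char[OF part finS])

lemma Achar: "(a :: 'e \<Rightarrow> 'k::field) \<in> schemoid_algebra (ext_partition E q S) \<longleftrightarrow>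
     (\<forall>h. h \<notin> Mor E \<longrightarrow> a h = 0) \<and> (\<forall>\<pi>\<in>ext_partition E q S. \<forall>x\<in>\<pi>. \<forall>y\<in>\<pi>. a x = a y)"
  by (rule sa_char[OF ext_part ext_fin])

lemma lift_A: "(b :: 'm \<Rightarrow> 'k::field) \<in> schemoid_algebra S \<Longrightarrow> lift b \<in> schemoid_algebra (ext_partition E q S)"
  unfolding Achar unfolding ext_eq
proof (intro conjI allI impI ballI)
  fix h assume "h \<notin> Mor E" then show "lift b h = 0" unfolding lift_def by simp
next
  fix \<pi> x y assume b: "b \<in> schemoid_algebra S" and "\<pi> \<in> PB ` S" "x \<in> \<pi>" "y \<in> \<pi>"
  then obtain \<sigma> where s: "\<sigma> \<in> S" "x \<in> PB \<sigma>" "y \<in> PB \<sigma>" by blast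
  then have xy: "x \<in> Mor E" "y \<in> Mor E" "q x \<in> \<sigma>" "q y \<in> \<sigma>" unfolding PB_def by auto
  have "\<forall>\<sigma>\<in>S. \<forall>x\<in>\<sigma>. \<forall>y\<in>\<sigma>. b x = b y" using b unfolding Bchar by blast
  then have "b (q x) = b (q y)" using s(1) xy(3,4) by blast
  then show "lift b x = lift b y" unfolding lift_def using xy(1,2) by simp
qed

lemma A_lift:
  assumes a: "(a :: 'e \<Rightarrow> 'k::field) \<in> schemoid_algebra (ext_partition E q S)"
  shows "\<exists>b\<in>schemoid_algebra S. a = lift b"
proof -
  have a1: "\<And>h. h \<notin> Mor E \<Longrightarrow> a h = 0" using a unfolding Achar by blast
  have a2: "\<And>\<sigma> x y. \<sigma> \<in> S \<Longrightarrow> x \<in> PB \<sigma> \<Longrightarrow> y \<in> PB \<sigma> \<Longrightarrow> a x = a y"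
    using a unfolding Achar unfolding ext_eq by blast
  define r where "r h = (SOME e. e \<in> Mor E \<and> q e = h)" for h
  have r: "\<And>h. h \<in> Mor C \<Longrightarrow> r h \<in> Mor E \<and> q (r h) = h"
  proof -
    fix h assume "h \<in> Mor C"
    then have "\<exists>e. e \<in> Mor E \<and> q e = h" using full by blast
    then show "r h \<in> Mor E \<and> q (r h) = h" unfolding r_def by (rule someI_ex)
  qed
  define b where "b h = (if h \<in> Mor C then a (r h) else 0)" for h
  have "b \<in> schemoid_algebra S" unfolding Bchar
  proof (intro conjI allI impI ballI)
    fix h assume "h \<notin> Mor C" then show "b h = 0" unfolding b_def by simp
  next
    fix \<sigma> x y assume s: "\<sigma> \<in> S" and x: "x \<in> \<sigma>" and y: "y \<in> \<sigma>"
    have xm: "x \<in> Mor C" "y \<in> Mor C" using blk_sub[OF s] x y by auto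
    have "r x \<in> PB \<sigma>" "r y \<in> PB \<sigma>" using r xm x y unfolding PB_def by auto
    then have "a (r x) = a (r y)" by (rule a2[OF s])
    then show "b x = b y" unfolding b_def using xm by simp
  qed
  moreover have "a = lift b"
  proof
    fix e show "a e = lift b e"
    proof (cases "e \<in> Mor E")
      case True
      have qe: "q e \<in> Mor C" using qmor[OF True] by simp
      then obtain \<sigma> where s: "\<sigma> \<in> S" "q e \<in> \<sigma>" using blk_cover by blast
      have "e \<in> PB \<sigma>" "r (q e) \<in> PB \<sigma>" using True s r[OF qe] unfolding PB_def by auto
      then have "a e = a (r (q e))" by (rule a2[OF s(1)])
      then show ?thesis using True qe unfolding lift_def b_def by simp
    next
      case False then show ?thesis using a1 unfolding lift_def by simp
    qed
  qed
  ultimately show ?thesis by blast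
qed

lemma q_block_PB: "\<sigma> \<in> S \<Longrightarrow> q_block q S (PB \<sigma>) = \<sigma>"
  unfolding q_block_def
proof (rule the_equality)
  assume s: "\<sigma> \<in> S"
  show "\<sigma> \<in> S \<and> q ` PB \<sigma> \<subseteq> \<sigma>" using s qimg by simp
  fix \<tau> assume t: "\<tau> \<in> S \<and> q ` PB \<sigma> \<subseteq> \<tau>"
  then have "\<sigma> \<subseteq> \<tau>" using qimg[OF s] by simp
  then have "\<sigma> \<inter> \<tau> \<noteq> {}" using blk_ne[OF s] by blast
  then show "\<tau> = \<sigma>" using blk_disj s t by blast
qed

lemma n_q_PB: "\<sigma> \<in> S \<Longrightarrow> n_q C E q S (PB \<sigma>) = N"
proof -
  assume s: "\<sigma> \<in> S"
  define g where "g = (SOME g. g \<in> \<sigma>)"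
  have g: "g \<in> \<sigma>" unfolding g_def using blk_ne[OF s] by (simp add: some_in_eq)
  have gm: "g \<in> Mor C" using blk_sub[OF s] g by blast
  have "{f \<in> PB \<sigma>. Cod E f = Cod C g \<and> q f = g} = fib g"
    unfolding PB_def fib_def using g qmor by auto
  then show ?thesis unfolding n_q_def Let_def q_block_PB[OF s] g_def[symmetric]
    using card_fibN[OF gm] by simp
qed

lemma Kq_lift:
  assumes b: "(b :: 'm \<Rightarrow> 'k::field) \<in> schemoid_algebra S"
  shows "K_q C E q S (lift b) = (\<lambda>h. of_nat N * b h)"
proof
  fix h
  let ?c = "\<lambda>\<sigma>. lift b (SOME e. e \<in> PB \<sigma>) * of_nat N"
  have "K_q C E q S (lift b) h = (\<Sum>\<sigma>\<in>S. ?c \<sigma> * s_elem \<sigma> h)"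
    unfolding K_q_def ext_eq sum.reindex[OF inj_PB] o_def
  proof (intro sum.cong refl)
    fix \<sigma> assume s: "\<sigma> \<in> S"
    show "lift b (SOME e. e \<in> PB \<sigma>) * of_nat (n_q C E q S (PB \<sigma>)) * s_elem (q_block q S (PB \<sigma>)) h
        = ?c \<sigma> * s_elem \<sigma> h" unfolding q_block_PB[OF s] n_q_PB[OF s] ..
  qed
  also have "\<dots> = of_nat N * b h"
  proof (cases "h \<in> Mor C")
    case True
    then obtain \<sigma> where s: "\<sigma> \<in> S" "h \<in> \<sigma>" using blk_cover by blast
    have "(SOME e. e \<in> PB \<sigma>) \<in> PB \<sigma>" using PB_ne[OF s(1)] by (simp add: some_in_eq)
    then have m: "(SOME e. e \<in> PB \<sigma>) \<in> Mor E" "q (SOME e. e \<in> PB \<sigma>) \<in> \<sigma>" unfolding PB_def by auto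
    have "\<forall>\<sigma>\<in>S. \<forall>x\<in>\<sigma>. \<forall>y\<in>\<sigma>. b x = b y" using b unfolding Bchar by blast
    then have "b (q (SOME e. e \<in> PB \<sigma>)) = b h" using s m(2) by blast
    then have "lift b (SOME e. e \<in> PB \<sigma>) = b h" using m(1) unfolding lift_def by simp
    moreover have "(\<Sum>\<sigma>\<in>S. ?c \<sigma> * s_elem \<sigma> h) = ?c \<sigma>" by (rule sum_s_elem_in[OF part finS s])
    ultimately show ?thesis by simp
  next
    case False
    have "(\<Sum>\<sigma>\<in>S. ?c \<sigma> * s_elem \<sigma> h) = 0" using False by (rule sum_s_elem_out[OF part])
    moreover have "b h = 0" using b False unfolding Bchar by blast
    ultimately show ?thesis by simp
  qed
  finally show "K_q C E q S (lift b) h = of_nat N * b h" .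
qed

lemma pair_count:
  assumes "finite A" "finite B"
  shows "(\<Sum>x\<in>A. \<Sum>y\<in>B. if P x y then c else 0) = of_nat (card {(x, y) \<in> A \<times> B. P x y}) * (c :: 'k::field)"
proof -
  have "(\<Sum>x\<in>A. \<Sum>y\<in>B. if P x y then c else 0) = (\<Sum>p\<in>A \<times> B. if P (fst p) (snd p) then c else 0)"
    by (subst sum.cartesian_product) (simp add: split_def)
  also have "\<dots> = (\<Sum>p\<in>{p \<in> A \<times> B. P (fst p) (snd p)}. c)"
    using sum.inter_filter[of "A \<times> B" "\<lambda>_. c" "\<lambda>p. P (fst p) (snd p)"] assms by simp
  also have "{p \<in> A \<times> B. P (fst p) (snd p)} = {(x, y) \<in> A \<times> B. P x y}" by auto
  finally show ?thesis by simp
qed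

lemma mult_formula:
  assumes b1: "(b1 :: 'm \<Rightarrow> 'k::field) \<in> schemoid_algebra S" and b2: "b2 \<in> schemoid_algebra S"
  shows "cat_alg_mult C b1 b2 f = (\<Sum>\<sigma>\<in>S. \<Sum>\<tau>\<in>S. of_nat (card (structure_pairs C \<sigma> \<tau> f)) *
            (b1 (SOME x. x \<in> \<sigma>) * b2 (SOME x. x \<in> \<tau>)))"
proof -
  have c1: "\<forall>\<sigma>\<in>S. \<forall>x\<in>\<sigma>. \<forall>y\<in>\<sigma>. b1 x = b1 y" using b1 unfolding Bchar by blast
  have c2: "\<forall>\<sigma>\<in>S. \<forall>x\<in>\<sigma>. \<forall>y\<in>\<sigma>. b2 x = b2 y" using b2 unfolding Bchar by blast
  have sm: "\<And>\<sigma>. \<sigma> \<in> S \<Longrightarrow> (SOME x. x \<in> \<sigma>) \<in> \<sigma>" using blk_ne by (simp add: some_in_eq)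
  have finb: "\<forall>\<sigma>\<in>S. finite \<sigma>" using blk_sub finC finite_subset by blast
  have disj: "\<forall>\<sigma>\<in>S. \<forall>\<tau>\<in>S. \<sigma> \<noteq> \<tau> \<longrightarrow> \<sigma> \<inter> \<tau> = {}" using blk_disj by blast
  have U: "Mor C = \<Union>S" using part unfolding is_partition_def by blast
  let ?G = "\<lambda>f1 f2. if Dom C f1 = Cod C f2 \<and> Comp C f1 f2 = f then b1 f1 * b2 f2 else 0"
  have "cat_alg_mult C b1 b2 f = (\<Sum>f1\<in>\<Union>S. \<Sum>f2\<in>\<Union>S. ?G f1 f2)"
    unfolding cat_alg_mult_def U ..
  also have "\<dots> = (\<Sum>\<sigma>\<in>S. \<Sum>f1\<in>\<sigma>. \<Sum>\<tau>\<in>S. \<Sum>f2\<in>\<tau>. ?G f1 f2)"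
  proof -
    have UD: "\<And>g. sum g (\<Union>S) = (\<Sum>\<sigma>\<in>S. sum g \<sigma>)" using sum.Union_disjoint[OF finb disj] by simp
    show ?thesis by (simp only: UD)
  qed
  also have "\<dots> = (\<Sum>\<sigma>\<in>S. \<Sum>\<tau>\<in>S. \<Sum>f1\<in>\<sigma>. \<Sum>f2\<in>\<tau>. ?G f1 f2)"
    by (intro sum.cong refl) (rule sum.swap)
  also have "\<dots> = (\<Sum>\<sigma>\<in>S. \<Sum>\<tau>\<in>S. of_nat (card (structure_pairs C \<sigma> \<tau> f)) *
            (b1 (SOME x. x \<in> \<sigma>) * b2 (SOME x. x \<in> \<tau>)))"
  proof (intro sum.cong refl)
    fix \<sigma> \<tau> assume s: "\<sigma> \<in> S" and t: "\<tau> \<in> S"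
    have "(\<Sum>f1\<in>\<sigma>. \<Sum>f2\<in>\<tau>. ?G f1 f2) = (\<Sum>f1\<in>\<sigma>. \<Sum>f2\<in>\<tau>.
        if Dom C f1 = Cod C f2 \<and> Comp C f1 f2 = f then b1 (SOME x. x \<in> \<sigma>) * b2 (SOME x. x \<in> \<tau>) else 0)"
    proof (intro sum.cong refl)
      fix f1 f2 assume "f1 \<in> \<sigma>" "f2 \<in> \<tau>"
      then have "b1 f1 = b1 (SOME x. x \<in> \<sigma>)" "b2 f2 = b2 (SOME x. x \<in> \<tau>)"
        using c1 c2 s t sm[OF s] sm[OF t] by blast+
      then show "?G f1 f2 = (if Dom C f1 = Cod C f2 \<and> Comp C f1 f2 = f then b1 (SOME x. x \<in> \<sigma>) * b2 (SOME x. x \<in> \<tau>) else 0)"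
        by simp
    qed
    also have "\<dots> = of_nat (card (structure_pairs C \<sigma> \<tau> f)) * (b1 (SOME x. x \<in> \<sigma>) * b2 (SOME x. x \<in> \<tau>))"
      unfolding structure_pairs_def by (rule pair_count) (use finb s t in auto)
    finally show "(\<Sum>f1\<in>\<sigma>. \<Sum>f2\<in>\<tau>. ?G f1 f2) = of_nat (card (structure_pairs C \<sigma> \<tau> f)) *
            (b1 (SOME x. x \<in> \<sigma>) * b2 (SOME x. x \<in> \<tau>))" .
  qed
  finally show ?thesis .
qed

lemma B_mult:
  assumes b1: "(b1 :: 'm \<Rightarrow> 'k::field) \<in> schemoid_algebra S" and b2: "b2 \<in> schemoid_algebra S"
  shows "cat_alg_mult C b1 b2 \<in> schemoid_algebra S"
  unfolding Bchar
proof (intro conjI allI impI ballI)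
  fix h assume h: "h \<notin> Mor C"
  show "cat_alg_mult C b1 b2 h = 0" unfolding cat_alg_mult_def
  proof (intro sum.neutral ballI)
    fix f g assume fg: "f \<in> Mor C" "g \<in> Mor C"
    show "(if Dom C f = Cod C g \<and> Comp C f g = h then b1 f * b2 g else 0) = 0"
    proof (cases "Dom C f = Cod C g")
      case True
      then have "Comp C f g \<in> Mor C" using compC fg by blast
      then have "Comp C f g \<noteq> h" using h by blast
      then show ?thesis by simp
    qed simp
  qed
next
  fix \<mu> x y assume m: "\<mu> \<in> S" "x \<in> \<mu>" "y \<in> \<mu>"
  have "\<And>\<sigma> \<tau>. \<sigma> \<in> S \<Longrightarrow> \<tau> \<in> S \<Longrightarrow> card (structure_pairs C \<sigma> \<tau> x) = card (structure_pairs C \<sigma> \<tau> y)"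
    using qs m by blast
  then show "cat_alg_mult C b1 b2 x = cat_alg_mult C b1 b2 y"
    unfolding mult_formula[OF b1 b2] by (intro sum.cong refl) (simp only:)
qed

lemma B_scale:
  assumes b: "(b :: 'm \<Rightarrow> 'k::field) \<in> schemoid_algebra S"
  shows "(\<lambda>h. c * b h) \<in> schemoid_algebra S"
proof -
  have z: "\<forall>h. h \<notin> Mor C \<longrightarrow> b h = 0" and k: "\<forall>\<sigma>\<in>S. \<forall>x\<in>\<sigma>. \<forall>y\<in>\<sigma>. b x = b y"
    using b unfolding Bchar by blast+
  show ?thesis unfolding Bchar
  proof (intro conjI allI impI ballI)
    fix h assume "h \<notin> Mor C" then show "c * b h = 0" using z by simp
  next
    fix \<sigma> x y assume "\<sigma> \<in> S" "x \<in> \<sigma>" "y \<in> \<sigma>"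
    then have "b x = b y" using k by blast
    then show "c * b x = c * b y" by simp
  qed
qed

lemma B_ind: "(\<lambda>h. if h \<in> Mor C then 1 else 0 :: 'k::field) \<in> schemoid_algebra S"
  unfolding Bchar
proof (intro conjI allI impI ballI)
  fix h :: 'm assume "h \<notin> Mor C" then show "(if h \<in> Mor C then 1 else 0 :: 'k) = 0" by simp
next
  fix \<sigma> x y assume s: "\<sigma> \<in> S" "x \<in> \<sigma>" "y \<in> \<sigma>"
  then have "x \<in> Mor C" "y \<in> Mor C" using blk_sub by blast+
  then show "(if x \<in> Mor C then 1 else 0 :: 'k) = (if y \<in> Mor C then 1 else 0)" by simp
qed

lemma Kq_add: "K_q C E q S (\<lambda>h. a h + b h) = (\<lambda>h. K_q C E q S a h + K_q C E q S b h)"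
  unfolding K_q_def by (simp add: sum.distrib distrib_right)

lemma Kq_scale: "K_q C E q S (\<lambda>h. c * a h) = (\<lambda>h. c * K_q C E q S a h)"
  unfolding K_q_def by (simp add: sum_distrib_left mult.assoc)

lemma mult_scale: "cat_alg_mult C (\<lambda>h. c * b1 h) (\<lambda>h. c * b2 h) = (\<lambda>h. c * (c * cat_alg_mult C b1 b2 h))"
proof
  fix h
  show "cat_alg_mult C (\<lambda>h. c * b1 h) (\<lambda>h. c * b2 h) h = c * (c * cat_alg_mult C b1 b2 h)"
    unfolding cat_alg_mult_def sum_distrib_left
  proof (rule sum.cong[OF refl], rule sum.cong[OF refl])
    fix f g
    show "(if Dom C f = Cod C g \<and> Comp C f g = h then c * b1 f * (c * b2 g) else 0) =
          c * (c * (if Dom C f = Cod C g \<and> Comp C f g = h then b1 f * b2 g else 0))"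
      by (simp add: mult_ac)
  qed
qed

lemma Kq_mult:
  assumes a: "(a :: 'e \<Rightarrow> 'k::field) \<in> schemoid_algebra (ext_partition E q S)"
    and b: "b \<in> schemoid_algebra (ext_partition E q S)"
  shows "K_q C E q S (cat_alg_mult E a b) = cat_alg_mult C (K_q C E q S a) (K_q C E q S b)"
proof -
  obtain b1 where b1: "b1 \<in> schemoid_algebra S" "a = lift b1" using A_lift[OF a] by blast
  obtain b2 where b2: "b2 \<in> schemoid_algebra S" "b = lift b2" using A_lift[OF b] by blast
  have m: "(\<lambda>h. of_nat N * cat_alg_mult C b1 b2 h) \<in> schemoid_algebra S"
    by (rule B_scale[OF B_mult[OF b1(1) b2(1)]])
  show ?thesis unfolding b1(2) b2(2) mult_lift_eq Kq_lift[OF m] Kq_lift[OF b1(1)] Kq_lift[OF b2(1)] mult_scale ..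
qed

lemma Kq_img_sub:
  "K_q C E q S ` schemoid_algebra (ext_partition E q S) \<subseteq> (schemoid_algebra S :: ('m \<Rightarrow> 'k::field) set)"
proof (rule image_subsetI)
  fix a :: "'e \<Rightarrow> 'k" assume a: "a \<in> schemoid_algebra (ext_partition E q S)"
  obtain b where b: "b \<in> schemoid_algebra S" "a = lift b" using A_lift[OF a] by blast
  show "K_q C E q S a \<in> schemoid_algebra S" unfolding b(2) Kq_lift[OF b(1)] by (rule B_scale[OF b(1)])
qed

lemma Kq_img_sup:
  assumes N0: "of_nat N \<noteq> (0 :: 'k::field)"
  shows "(schemoid_algebra S :: ('m \<Rightarrow> 'k) set) \<subseteq> K_q C E q S ` schemoid_algebra (ext_partition E q S)"
proof (rule subsetI)
  fix b :: "'m \<Rightarrow> 'k" assume b: "b \<in> schemoid_algebra S"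
  define b' where "b' = (\<lambda>h. inverse (of_nat N) * b h)"
  have b': "b' \<in> schemoid_algebra S" unfolding b'_def by (rule B_scale[OF b])
  have e: "K_q C E q S (lift b') = b"
  proof -
    have "K_q C E q S (lift b') = (\<lambda>h. of_nat N * b' h)" by (rule Kq_lift[OF b'])
    also have "\<dots> = b" unfolding b'_def by (rule HOL.ext) (use N0 in \<open>simp add: mult.assoc[symmetric]\<close>)
    finally show ?thesis .
  qed
  show "b \<in> K_q C E q S ` schemoid_algebra (ext_partition E q S)"
  proof (rule image_eqI)
    show "b = K_q C E q S (lift b')" using e by simp
    show "lift b' \<in> schemoid_algebra (ext_partition E q S)" by (rule lift_A[OF b'])
  qed
qed

lemma Kq_inj:
  assumes N0: "of_nat N \<noteq> (0 :: 'k::field)"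
  shows "inj_on (K_q C E q S :: ('e \<Rightarrow> 'k) \<Rightarrow> 'm \<Rightarrow> 'k) (schemoid_algebra (ext_partition E q S))"
proof (rule inj_onI)
  fix a1 a2 :: "'e \<Rightarrow> 'k"
  assume a1: "a1 \<in> schemoid_algebra (ext_partition E q S)" and a2: "a2 \<in> schemoid_algebra (ext_partition E q S)"
    and eq: "K_q C E q S a1 = K_q C E q S a2"
  obtain b1 where b1: "b1 \<in> schemoid_algebra S" "a1 = lift b1" using A_lift[OF a1] by blast
  obtain b2 where b2: "b2 \<in> schemoid_algebra S" "a2 = lift b2" using A_lift[OF a2] by blast
  have e2: "(\<lambda>h. of_nat N * b1 h) = (\<lambda>h. of_nat N * b2 h)"
    using eq unfolding b1(2) b2(2) Kq_lift[OF b1(1)] Kq_lift[OF b2(1)] .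
  have "b1 = b2"
  proof
    fix h
    have "of_nat N * b1 h = of_nat N * b2 h" using fun_cong[OF e2, of h] by simp
    then show "b1 h = b2 h" using N0 by simp
  qed
  then show "a1 = a2" using b1 b2 by simp
qed

lemma iso_if:
  assumes N0: "of_nat N \<noteq> (0 :: 'k::field)"
  shows "alg_iso_between E (schemoid_algebra (ext_partition E q S)) C (schemoid_algebra S)
            (K_q C E q S :: ('e \<Rightarrow> 'k) \<Rightarrow> 'm \<Rightarrow> 'k)"
proof -
  have bij: "bij_betw (K_q C E q S :: ('e \<Rightarrow> 'k) \<Rightarrow> 'm \<Rightarrow> 'k) (schemoid_algebra (ext_partition E q S)) (schemoid_algebra S)"
    unfolding bij_betw_def using Kq_inj[OF N0] Kq_img_sub Kq_img_sup[OF N0] by blast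
  show ?thesis unfolding alg_iso_between_def
    using bij Kq_add Kq_scale Kq_mult by blast
qed

lemma zero_case:
  assumes N0: "of_nat N = (0 :: 'k::field)"
  shows "\<not> alg_iso_between E (schemoid_algebra (ext_partition E q S)) C (schemoid_algebra S)
            (K_q C E q S :: ('e \<Rightarrow> 'k) \<Rightarrow> 'm \<Rightarrow> 'k)"
    and "\<forall>a::'e \<Rightarrow> 'k. a \<in> schemoid_algebra (ext_partition E q S) \<longrightarrow> K_q C E q S a = (\<lambda>_. 0)"
proof -
  show Z: "\<forall>a::'e \<Rightarrow> 'k. a \<in> schemoid_algebra (ext_partition E q S) \<longrightarrow> K_q C E q S a = (\<lambda>_. 0)"
  proof (intro allI impI)
    fix a :: "'e \<Rightarrow> 'k" assume a: "a \<in> schemoid_algebra (ext_partition E q S)"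
    obtain b where b: "b \<in> schemoid_algebra S" "a = lift b" using A_lift[OF a] by blast
    show "K_q C E q S a = (\<lambda>_. 0)" unfolding b(2) Kq_lift[OF b(1)] N0 by simp
  qed
  show "\<not> alg_iso_between E (schemoid_algebra (ext_partition E q S)) C (schemoid_algebra S)
            (K_q C E q S :: ('e \<Rightarrow> 'k) \<Rightarrow> 'm \<Rightarrow> 'k)"
  proof
    assume "alg_iso_between E (schemoid_algebra (ext_partition E q S)) C (schemoid_algebra S)
            (K_q C E q S :: ('e \<Rightarrow> 'k) \<Rightarrow> 'm \<Rightarrow> 'k)"
    then have im: "K_q C E q S ` schemoid_algebra (ext_partition E q S) = (schemoid_algebra S :: ('m \<Rightarrow> 'k) set)"
      unfolding alg_iso_between_def bij_betw_def by blast
    have "(\<lambda>h. if h \<in> Mor C then 1 else 0 :: 'k) \<in> K_q C E q S ` schemoid_algebra (ext_partition E q S)"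
      using B_ind im by blast
    then obtain a :: "'e \<Rightarrow> 'k" where a: "a \<in> schemoid_algebra (ext_partition E q S)"
      "(\<lambda>h. if h \<in> Mor C then 1 else 0 :: 'k) = K_q C E q S a" by blast
    then have "(\<lambda>h. if h \<in> Mor C then 1 else 0 :: 'k) = (\<lambda>_. 0)" using Z by simp
    from fun_cong[OF this, of "Ide C x0"] have "(if Ide C x0 \<in> Mor C then 1 else 0 :: 'k) = 0" by simp
    then show False using ideC[OF x0_obj] by simp
  qed
qed

end

theorem corollary6p13:
  fixes C :: "('o, 'm) cat" and S :: "'m set set"
    and To :: "'o \<Rightarrow> 'o" and T :: "'m \<Rightarrow> 'm"
    and scale :: "'k::field \<Rightarrow> 'v::ab_group_add \<Rightarrow> 'v"
    and Hob :: "'o \<Rightarrow> 'v set" and Hm :: "'m \<Rightarrow> 'v \<Rightarrow> 'v"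
    and E :: "('o, 'e) cat" and q :: "'e \<Rightarrow> 'm" and act :: "'e \<Rightarrow> 'v \<Rightarrow> 'e"
  assumes schemoid: "finite_basic_association_schemoid C S To T"
    and conn: "connected_cat C"
    and T_inv: "\<forall>f\<in>Mor C. Dom C (T f) = Cod C f \<and> Cod C (T f) = Dom C f \<and>
                   Comp C (T f) f = Ide C (Dom C f) \<and> Comp C f (T f) = Ide C (Cod C f)"
    and H: "module_functor scale C Hob Hm"
    and D_fin: "\<forall>g\<in>Mor C. finite (pbH_obj C Hob g)"
    and ext: "linear_extension C Hob Hm E q act"
  shows "(alg_iso_between E (schemoid_algebra (ext_partition E q S)) C (schemoid_algebra S)
            (K_q C E q S :: ('e \<Rightarrow> 'k) \<Rightarrow> 'm \<Rightarrow> 'k)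
          \<longleftrightarrow> (\<forall>g\<in>Mor C. \<not> CHAR('k) dvd card (pbH_obj C Hob g)))
       \<and> ((\<exists>g\<in>Mor C. CHAR('k) dvd card (pbH_obj C Hob g)) \<longrightarrow>
            (\<forall>a::'e \<Rightarrow> 'k. a \<in> schemoid_algebra (ext_partition E q S) \<longrightarrow> K_q C E q S a = (\<lambda>_. 0)))"
proof -
  have as: "association_schemoid C S To T" and finC: "finite (Mor C)"
    using schemoid unfolding finite_basic_association_schemoid_def by blast+
  have qs0: "quasi_schemoid C S" and ci: "contravariant_involution C To T"
    using as unfolding association_schemoid_def by blast+
  have catC: "is_category C" and part: "is_partition (Mor C) S"
    and qs: "\<forall>\<sigma>\<in>S. \<forall>\<tau>\<in>S. \<forall>\<mu>\<in>S. \<forall>f\<in>\<mu>. \<forall>g\<in>\<mu>.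
        card (structure_pairs C \<sigma> \<tau> f) = card (structure_pairs C \<sigma> \<tau> g)"
    using qs0 unfolding quasi_schemoid_def by blast+
  have Tmor: "\<forall>f\<in>Mor C. T f \<in> Mor C" using ci unfolding contravariant_involution_def by blast
  have H0: "\<forall>x\<in>Obj C. 0 \<in> Hob x"
    and Hmap: "\<forall>f\<in>Mor C. \<forall>a\<in>Hob (Dom C f). Hm f a \<in> Hob (Cod C f)"
    and Hadd: "\<forall>f\<in>Mor C. \<forall>a\<in>Hob (Dom C f). \<forall>b\<in>Hob (Dom C f). Hm f (a + b) = Hm f a + Hm f b"
    and Hid: "\<forall>x\<in>Obj C. \<forall>a\<in>Hob x. Hm (Ide C x) a = a"
    and Hcomp: "\<forall>f\<in>Mor C. \<forall>g\<in>Mor C. Dom C f = Cod C g \<longrightarrow>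
        (\<forall>a\<in>Hob (Dom C g). Hm (Comp C f g) a = Hm f (Hm g a))"
    using H unfolding module_functor_def by blast+
  interpret L: lxt C S T Hob Hm E q act
    by (rule lxt.intro; fact)
  have ide: "Ide C L.x0 \<in> Mor C" using L.ideC[OF L.x0_obj] by blast
  have cD: "\<And>g. g \<in> Mor C \<Longrightarrow> card (pbH_obj C Hob g) = L.N" by (rule L.card_D)
  show ?thesis
  proof (cases "of_nat L.N = (0::'k)")
    case True
    then have dv: "CHAR('k) dvd L.N" by (simp add: of_nat_eq_0_iff_char_dvd)
    have "\<exists>g\<in>Mor C. CHAR('k) dvd card (pbH_obj C Hob g)" using ide cD dv by metis
    then show ?thesis using L.zero_case[OF True] by blast
  next
    case False
    then have dv: "\<not> CHAR('k) dvd L.N" by (simp add: of_nat_eq_0_iff_char_dvd)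
    have "\<forall>g\<in>Mor C. \<not> CHAR('k) dvd card (pbH_obj C Hob g)" using cD dv by simp
    then show ?thesis using L.iso_if[OF False] by blast
  qed
qed

end
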